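(* For every countable ordinal $\lambda<\omega_1$ there is a continuous map $f_\lambda:[0,1]\to[0,1]$ such that the chain components poset $(\mathfrak{C}_{f_\lambda},\preceq)$ is order isomorphic to the ordinal $\lambda+1$ with its usual order $\in$.
   Context: For a map $f:[0,1]\to[0,1]$ with the usual metric: an $\varepsilon$-chain from $x$ to $y$ is a finite sequence $x_0=x,\dots,x_n=y$, $n\ge1$, with $|f(x_i)-x_{i+1}|<\varepsilon$; $x\,\mathcal{C}\,y$ iff for every $\varepsilon>0$ there is an $\varepsilon$-chain from $x$ to $y$; $CR_f=\{x:x\,\mathcal{C}\,x\}$; $x\,E\,y$ iff $x\,\mathcal{C}\,y$ and $y\,\mathcal{C}\,x$; $\mathfrak{C}_f=CR_f/E$ is the set of chain components, partially ordered by $[x]\preceq[y]$ iff $y\,\mathcal{C}\,x$. *)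

theory Defs
  imports "HOL-Analysis.Analysis"
begin

definition eps_chain :: "(real \<Rightarrow> real) \<Rightarrow> real \<Rightarrow> real \<Rightarrow> real \<Rightarrow> bool" where
  "eps_chain f \<epsilon> x y \<longleftrightarrow>
     (\<exists>n::nat. \<exists>xs::nat \<Rightarrow> real. n \<ge> 1 \<and> xs 0 = x \<and> xs n = y \<and>
        (\<forall>i\<le>n. xs i \<in> {0..1}) \<and>
        (\<forall>i<n. \<bar>f (xs i) - xs (Suc i)\<bar> < \<epsilon>))"

definition chain_rel :: "(real \<Rightarrow> real) \<Rightarrow> real \<Rightarrow> real \<Rightarrow> bool" where
  "chain_rel f x y \<longleftrightarrow> (\<forall>\<epsilon>>0. eps_chain f \<epsilon> x y)"

definition chain_recurrent :: "(real \<Rightarrow> real) \<Rightarrow> real set" where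
  "chain_recurrent f = {x \<in> {0..1}. chain_rel f x x}"

definition chain_equiv :: "(real \<Rightarrow> real) \<Rightarrow> (real \<times> real) set" where
  "chain_equiv f = {(x, y). x \<in> chain_recurrent f \<and> y \<in> chain_recurrent f \<and>
                            chain_rel f x y \<and> chain_rel f y x}"

definition chain_components :: "(real \<Rightarrow> real) \<Rightarrow> real set set" where
  "chain_components f = chain_recurrent f // chain_equiv f"

definition comp_le :: "(real \<Rightarrow> real) \<Rightarrow> real set \<Rightarrow> real set \<Rightarrow> bool" where
  "comp_le f A B \<longleftrightarrow> (\<exists>x\<in>A. \<exists>y\<in>B. chain_rel f y x)"

text \<open>Given a well order r (an ordinal lambda), the (non-strict) order of lambda+1:
  a copy of r (via Some) with a new greatest element None on top.\<close>
definition succ_ord :: "'a rel \<Rightarrow> 'a option rel" where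
  "succ_ord r = {(Some a, Some b) | a b. (a, b) \<in> r} \<union>
                {(x, None) | x. x \<in> Some ` Field r \<union> {None}}"

end

theory Submission
  imports Defs
begin

definition fZ :: "real set \<Rightarrow> real \<Rightarrow> real" where
  "fZ Z x = x - infdist x Z / 2"

lemma gap_no_chain:
  assumes cont: "continuous_on {0..1} f" and le: "\<forall>x\<in>{0..1}. f x \<le> x"
    and y: "y \<in> {0..1}" "f y < y"
  shows "\<exists>\<epsilon>>0. \<forall>x z. x \<le> y \<longrightarrow> y \<le> z \<longrightarrow> \<not> eps_chain f \<epsilon> x z"
proof -
  define \<delta> where "\<delta> = y - f y"
  have \<delta>: "\<delta> > 0" using y \<delta>_def by simp
  from cont y(1) have "continuous (at y within {0..1}) f"
    using continuous_on_eq_continuous_within by blast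
  then obtain \<eta> where \<eta>: "\<eta> > 0" "\<forall>x\<in>{0..1}. dist x y < \<eta> \<longrightarrow> dist (f x) (f y) < \<delta>/2"
    using \<delta> unfolding continuous_within_eps_delta by (meson half_gt_zero)
  define \<epsilon> where "\<epsilon> = min \<eta> (\<delta>/2)"
  have step: "xn < y" if "x \<in> {0..1}" "x \<le> y" "\<bar>f x - xn\<bar> < \<epsilon>" for x xn
  proof (cases "dist x y < \<eta>")
    case True
    then have "dist (f x) (f y) < \<delta>/2" using \<eta> that by auto
    then have "f x < f y + \<delta>/2" unfolding dist_real_def by linarith
    moreover have "\<epsilon> \<le> \<delta>/2" using \<epsilon>_def by simp
    moreover have "xn < f x + \<epsilon>" using that(3) by (auto simp: abs_less_iff)
    ultimately show ?thesis using \<delta>_def by linarith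
  next
    case False
    then have "x \<le> y - \<eta>" using that by (auto simp: dist_real_def)
    moreover have "f x \<le> x" using le that by auto
    ultimately show ?thesis using that \<epsilon>_def by (auto simp: abs_less_iff)
  qed
  show ?thesis
  proof (intro exI[of _ \<epsilon>] conjI allI impI notI)
    show "\<epsilon> > 0" using \<eta> \<delta> \<epsilon>_def by simp
    fix x z assume xy: "x \<le> y" and yz: "y \<le> z" and "eps_chain f \<epsilon> x z"
    then obtain n xs where ch: "n \<ge> 1" "xs 0 = x" "xs n = z" "\<forall>i\<le>n. xs i \<in> {0..1}"
      "\<forall>i<n. \<bar>f (xs i) - xs (Suc i)\<bar> < \<epsilon>"
      unfolding eps_chain_def by blast
    have below: "1 \<le> i \<longrightarrow> i \<le> n \<longrightarrow> xs i < y" for i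
    proof (induction i)
      case 0 then show ?case by simp
    next
      case (Suc i)
      show ?case
      proof (intro impI)
        assume si: "Suc i \<le> n"
        have "xs i \<le> y" using Suc ch xy si by (cases i) auto
        then show "xs (Suc i) < y" using step[of "xs i" "xs (Suc i)"] ch si by auto
      qed
    qed
    show False using below[of n] ch(1,3) yz by simp
  qed
qed

lemma chain_down:
  assumes "p \<le> q" "0 \<le> p" "q \<le> 1" "\<forall>x\<in>{p..q}. p \<le> f x \<and> f x \<le> x" "\<epsilon> > 0"
  shows "eps_chain f \<epsilon> q p"
proof -
  define st where "st x = max p (f x - \<epsilon>/2)" for x
  define xs where "xs i = (st ^^ i) q" for i
  have xs_Suc: "xs (Suc i) = st (xs i)" for i by (simp add: xs_def)
  have bnd: "p \<le> xs i \<and> xs i \<le> q \<and> xs i \<le> max p (q - real i * \<epsilon>/2)" for i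
  proof (induction i)
    case 0 show ?case using assms by (simp add: xs_def)
  next
    case (Suc i)
    then have "p \<le> f (xs i)" "f (xs i) \<le> xs i" using assms(4) by auto
    moreover have "f (xs i) - \<epsilon>/2 \<le> max p (q - real (Suc i) * \<epsilon>/2)"
    proof (cases "xs i \<le> p")
      case True then show ?thesis using \<open>f (xs i) \<le> xs i\<close> assms(5) by auto
    next
      case False then have "xs i \<le> q - real i * \<epsilon>/2" using Suc by auto
      moreover have "real (Suc i) * \<epsilon>/2 = real i * \<epsilon>/2 + \<epsilon>/2" by (simp add: field_simps)
      ultimately have "f (xs i) - \<epsilon>/2 \<le> q - real (Suc i) * \<epsilon>/2" using \<open>f (xs i) \<le> xs i\<close> by linarith
      then show ?thesis by linarith
    qed
    ultimately show ?case using Suc assms(1,5) unfolding xs_Suc st_def by auto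
  qed
  define n where "n = nat \<lceil>2*(q-p)/\<epsilon>\<rceil> + 1"
  have "2*(q-p)/\<epsilon> \<le> real n" using real_nat_ceiling_ge[of "2*(q-p)/\<epsilon>"] n_def by simp
  then have "2*(q-p) \<le> real n * \<epsilon>" using assms(5) by (simp add: pos_divide_le_eq)
  then have "xs n = p" using bnd[of n] by (auto simp: max_def split: if_splits)
  moreover have fx: "p \<le> f (xs i)" for i using bnd[of i] assms(4) by auto
  have "\<bar>f (xs i) - xs (Suc i)\<bar> < \<epsilon>" for i
    using fx[of i] assms(5) unfolding xs_Suc st_def by (auto simp: max_def abs_if)
  moreover have "xs i \<in> {0..1}" for i using bnd[of i] assms by auto
  moreover have "xs 0 = q" by (simp add: xs_def)
  moreover have "n \<ge> 1" by (simp add: n_def)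
  ultimately show ?thesis unfolding eps_chain_def
    by blast
qed

lemma partA:
  assumes cl: "closed Z" and sub: "Z \<subseteq> {0..1}" and z0: "0 \<in> Z"
    and gap: "\<forall>z1\<in>Z. \<forall>z2\<in>Z. z1 < z2 \<longrightarrow> (\<exists>y. z1 < y \<and> y < z2 \<and> y \<notin> Z)"
  shows "continuous_on {0..1} (fZ Z)" "fZ Z ` {0..1} \<subseteq> {0..1}"
    "chain_components (fZ Z) = (\<lambda>p. {p}) ` Z"
    "\<forall>p\<in>Z. \<forall>q\<in>Z. comp_le (fZ Z) {p} {q} \<longleftrightarrow> p \<le> q"
proof -
  have ne: "Z \<noteq> {}" using z0 by auto
  have inf0: "infdist x Z = 0" if "x \<in> Z" for x using that by (simp add: infdist_zero)
  have infpos: "infdist x Z > 0" if "x \<notin> Z" for x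
    using infdist_pos_not_in_closed[OF cl ne that] .
  have lep: "infdist x Z \<le> dist x p" if "p \<in> Z" for x p using infdist_le[OF that] .
  have fle: "fZ Z x \<le> x" for x unfolding fZ_def using infdist_nonneg[of x Z] by simp
  have fge: "fZ Z x \<ge> p" if "p \<in> Z" "p \<le> x" for x p
    using lep[OF that(1), of x] that(2) unfolding fZ_def by (simp add: dist_real_def)
  have fixp: "fZ Z p = p" if "p \<in> Z" for p using inf0[OF that] unfolding fZ_def by simp
  have nfix: "fZ Z x < x" if "x \<notin> Z" for x using infpos[OF that] unfolding fZ_def by simp
  show cont: "continuous_on {0..1} (fZ Z)" unfolding fZ_def
    by (intro continuous_on_diff continuous_on_id continuous_on_divide continuous_on_const continuous_on_infdist) auto
  show "fZ Z ` {0..1} \<subseteq> {0..1}"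
  proof
    fix y assume "y \<in> fZ Z ` {0..1}"
    then obtain x where x: "x \<in> {0..1}" "y = fZ Z x" by auto
    then show "y \<in> {0..1}" using fle[of x] fge[OF z0, of x] by auto
  qed
  have leall: "\<forall>x\<in>{0..1}. fZ Z x \<le> x" using fle by auto
  have rel: "chain_rel (fZ Z) p q \<longleftrightarrow> q \<le> p" if pq: "p \<in> Z" "q \<in> Z" for p q
  proof
    assume "q \<le> p"
    moreover have "\<forall>x\<in>{q..p}. q \<le> fZ Z x \<and> fZ Z x \<le> x" using fge[OF pq(2)] fle by auto
    moreover have "0 \<le> q" "p \<le> 1" using pq sub by auto
    ultimately show "chain_rel (fZ Z) p q" unfolding chain_rel_def
      using chain_down[of q p "fZ Z"] by blast
  next
    assume c: "chain_rel (fZ Z) p q"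
    show "q \<le> p"
    proof (rule ccontr)
      assume "\<not> q \<le> p"
      then have "p < q" by simp
      then obtain y where y: "p < y" "y < q" "y \<notin> Z" using gap[rule_format, OF pq \<open>p < q\<close>] by blast
      have "0 \<le> p" "q \<le> 1" using pq sub by auto
      then have y01: "y \<in> {0..1}" using y by simp
      obtain \<epsilon> where e: "\<epsilon> > 0" "\<forall>x z. x \<le> y \<longrightarrow> y \<le> z \<longrightarrow> \<not> eps_chain (fZ Z) \<epsilon> x z"
        using gap_no_chain[OF cont leall y01 nfix[OF y(3)]] by blast
      have "eps_chain (fZ Z) \<epsilon> p q" using c e(1) unfolding chain_rel_def by blast
      then show False using e(2) y by (meson less_imp_le)
    qed
  qed
  have cr: "chain_recurrent (fZ Z) = Z"
  proof
    show "chain_recurrent (fZ Z) \<subseteq> Z"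
    proof
      fix x assume "x \<in> chain_recurrent (fZ Z)"
      then have x: "x \<in> {0..1}" "chain_rel (fZ Z) x x" unfolding chain_recurrent_def by auto
      show "x \<in> Z"
      proof (rule ccontr)
        assume "x \<notin> Z"
        obtain \<epsilon> where "\<epsilon> > 0" "\<forall>u z. u \<le> x \<longrightarrow> x \<le> z \<longrightarrow> \<not> eps_chain (fZ Z) \<epsilon> u z"
          using gap_no_chain[OF cont leall x(1) nfix[OF \<open>x \<notin> Z\<close>]] by blast
        moreover have "eps_chain (fZ Z) \<epsilon> x x" using x(2) \<open>\<epsilon> > 0\<close> unfolding chain_rel_def by blast
        ultimately show False by blast
      qed
    qed
    show "Z \<subseteq> chain_recurrent (fZ Z)" using rel sub unfolding chain_recurrent_def by auto
  qed
  have ce: "chain_equiv (fZ Z) = Id_on Z"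
    unfolding chain_equiv_def cr using rel by (auto simp: Id_on_def)
  show "chain_components (fZ Z) = (\<lambda>p. {p}) ` Z"
    unfolding chain_components_def cr ce quotient_def by auto
  show "\<forall>p\<in>Z. \<forall>q\<in>Z. comp_le (fZ Z) {p} {q} \<longleftrightarrow> p \<le> q"
    unfolding comp_le_def using rel by auto
qed



definition wt :: "nat set \<Rightarrow> nat \<Rightarrow> real" where
  "wt N n = (if n \<in> N then (1/2)^Suc n else 0)"
definition msr :: "nat set \<Rightarrow> real" where
  "msr N = suminf (wt N)"

lemma wt_nonneg: "0 \<le> wt N n" by (simp add: wt_def)
lemma wt_le: "wt N n \<le> (1/2)^Suc n" by (simp add: wt_def)

lemma wt_summable: "summable (wt N)"
  by (rule summable_comparison_test[OF _ sums_summable[OF power_half_series]])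
     (auto simp: wt_def)

lemma msr_nonneg: "0 \<le> msr N"
  unfolding msr_def by (intro suminf_nonneg wt_summable wt_nonneg)

lemma msr_mono: "N \<subseteq> M \<Longrightarrow> msr N \<le> msr M"
  unfolding msr_def by (intro suminf_le wt_summable) (auto simp: wt_def)

lemma msr_le1: "msr N \<le> 1"
proof -
  have "msr N \<le> (\<Sum>n. (1/2::real)^Suc n)" unfolding msr_def
    by (intro suminf_le wt_summable sums_summable[OF power_half_series] wt_le)
  also have "\<dots> = 1" using power_half_series sums_unique by metis
  finally show ?thesis .
qed

lemma msr_empty: "msr {} = 0"
proof -
  have "wt {} = (\<lambda>n. 0)" by (auto simp: wt_def fun_eq_iff)
  then show ?thesis by (simp add: msr_def)
qed

lemma msr_add: "N \<inter> M = {} \<Longrightarrow> msr (N \<union> M) = msr N + msr M"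
proof -
  assume d: "N \<inter> M = {}"
  have "wt (N \<union> M) = (\<lambda>n. wt N n + wt M n)" using d by (auto simp: wt_def fun_eq_iff)
  then show ?thesis unfolding msr_def using suminf_add[OF wt_summable wt_summable] by simp
qed

lemma msr_single: "msr {k} = (1/2)^Suc k"
proof -
  have "wt {k} = (\<lambda>n. if n = k then (1/2::real)^Suc n else 0)" by (auto simp: wt_def fun_eq_iff)
  then show ?thesis unfolding msr_def using sums_unique[OF sums_single[of k "\<lambda>n. (1/2::real)^Suc n"]] by simp
qed

lemma msr_ge: "msr {K..} = (1/2)^K"
proof -
  have "msr {K..} = (\<Sum>n. wt {K..} (n + K)) + sum (wt {K..}) {..<K}"
    unfolding msr_def by (rule suminf_split_initial_segment[OF wt_summable])
  also have "sum (wt {K..}) {..<K} = 0" by (auto simp: wt_def)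
  also have "(\<lambda>n. wt {K..} (n + K)) = (\<lambda>n. (1/2)^K * (1/2::real)^Suc n)"
    by (auto simp: wt_def fun_eq_iff power_add)
  also have "(\<Sum>n. (1/2)^K * (1/2::real)^Suc n) = (1/2)^K * (\<Sum>n. (1/2::real)^Suc n)"
    by (rule suminf_mult[OF sums_summable[OF power_half_series]])
  also have "(\<Sum>n. (1/2::real)^Suc n) = 1" using power_half_series sums_unique by metis
  finally show ?thesis by simp
qed

lemma msr_tail: "msr N \<le> msr (N \<inter> {..<K}) + (1/2)^K"
proof -
  have "N = (N \<inter> {..<K}) \<union> (N \<inter> {K..})" by auto
  moreover have "(N \<inter> {..<K}) \<inter> (N \<inter> {K..}) = {}" by auto
  ultimately have "msr N = msr (N \<inter> {..<K}) + msr (N \<inter> {K..})"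
    using msr_add[of "N \<inter> {..<K}" "N \<inter> {K..}"] by metis
  moreover have "msr (N \<inter> {K..}) \<le> (1/2)^K" using msr_mono[of "N \<inter> {K..}" "{K..}"] msr_ge by auto
  ultimately show ?thesis by simp
qed

locale woe =
  fixes r :: "'a rel"
  assumes WO: "Well_order r" and CT: "countable (Field r)"
begin

definition idx :: "'a \<Rightarrow> nat" where "idx = to_nat_on (Field r)"
definition mu :: "'a set \<Rightarrow> real" where "mu S = msr (idx ` S)"
definition w :: "'a \<Rightarrow> real" where "w a = (1/2)^Suc (idx a)"
definition pr :: "'a \<Rightarrow> 'a set" where "pr a = {b. (b, a) \<in> r \<and> b \<noteq> a}"
definition g :: "'a \<Rightarrow> real" where "g a = mu (pr a)"
definition psi :: "'a option \<Rightarrow> real" where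
  "psi x = (case x of None \<Rightarrow> mu (Field r) | Some a \<Rightarrow> g a)"
definition ZZ :: "real set" where "ZZ = psi ` Field (succ_ord r)"

lemma inj_idx: "inj_on idx (Field r)"
  unfolding idx_def using inj_on_to_nat_on[OF CT] .

lemma refl: "a \<in> Field r \<Longrightarrow> (a, a) \<in> r"
  using WO unfolding order_on_defs refl_on_def by auto

lemma trans': "(a, b) \<in> r \<Longrightarrow> (b, c) \<in> r \<Longrightarrow> (a, c) \<in> r"
  using WO unfolding order_on_defs trans_def by blast

lemma antisym': "(a, b) \<in> r \<Longrightarrow> (b, a) \<in> r \<Longrightarrow> a = b"
  using WO unfolding order_on_defs antisym_def by blast

lemma total': "a \<in> Field r \<Longrightarrow> b \<in> Field r \<Longrightarrow> (a, b) \<in> r \<or> (b, a) \<in> r"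
  using WO refl unfolding order_on_defs total_on_def by metis

lemma inF: "(a, b) \<in> r \<Longrightarrow> a \<in> Field r \<and> b \<in> Field r"
  by (auto intro: FieldI1 FieldI2)

lemma minim: assumes "S \<subseteq> Field r" "S \<noteq> {}" shows "\<exists>c\<in>S. \<forall>x\<in>S. (c, x) \<in> r"
proof -
  have wf: "wf (r - Id)" using WO unfolding well_order_on_def by blast
  obtain x where "x \<in> S" using assms by auto
  then obtain c where c: "c \<in> S" "\<forall>y. (y, c) \<in> r - Id \<longrightarrow> y \<notin> S"
    using wf unfolding wf_eq_minimal by metis
  have "(c, x) \<in> r" if "x \<in> S" for x
  proof (cases "x = c")
    case True then show ?thesis using refl c assms by auto
  next
    case False then show ?thesis using total'[of c x] c that assms by auto
  qed
  then show ?thesis using c by auto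
qed

lemma finmax: assumes "finite F" "F \<noteq> {}" "F \<subseteq> Field r" shows "\<exists>m\<in>F. \<forall>x\<in>F. (x, m) \<in> r"
  using assms
proof (induction F rule: finite_ne_induct)
  case (singleton x) then show ?case using refl by auto
next
  case (insert x F)
  then obtain m where m: "m \<in> F" "\<forall>y\<in>F. (y, m) \<in> r" by auto
  show ?case
  proof (cases "(m, x) \<in> r")
    case True then show ?thesis using m refl insert.prems trans' by blast
  next
    case False
    then have "(x, m) \<in> r" using total'[of m x] insert.prems m by auto
    then show ?thesis using m by auto
  qed
qed

lemma pr_sub: "pr a \<subseteq> Field r" unfolding pr_def using inF by auto

lemma mu_nonneg: "0 \<le> mu S" unfolding mu_def by (rule msr_nonneg)
lemma mu_le1: "mu S \<le> 1" unfolding mu_def by (rule msr_le1)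
lemma mu_mono: "S \<subseteq> T \<Longrightarrow> mu S \<le> mu T" unfolding mu_def by (intro msr_mono image_mono)
lemma mu_empty: "mu {} = 0" unfolding mu_def by (simp add: msr_empty)
lemma mu_add: assumes "S \<subseteq> Field r" "T \<subseteq> Field r" "S \<inter> T = {}"
  shows "mu (S \<union> T) = mu S + mu T"
proof -
  have "idx ` S \<inter> idx ` T = {}"
    using inj_on_image_Int[OF inj_idx assms(1,2)] assms(3) by simp
  then show ?thesis unfolding mu_def image_Un by (rule msr_add)
qed
lemma mu_single: "mu {a} = w a" unfolding mu_def w_def by (simp add: msr_single)
lemma w_pos: "w a > 0" unfolding w_def by simp

lemma g_strict: assumes "(a, b) \<in> r" "a \<noteq> b" shows "g a + w a \<le> g b"
proof -
  have aW: "a \<in> Field r" using inF assms by auto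
  have "pr a \<union> {a} \<subseteq> pr b"
  proof
    fix x assume "x \<in> pr a \<union> {a}"
    then show "x \<in> pr b"
    proof
      assume "x \<in> pr a"
      then have x: "(x, a) \<in> r" "x \<noteq> a" unfolding pr_def by auto
      then have "(x, b) \<in> r" using trans' assms by blast
      moreover have "x \<noteq> b" using x assms antisym' by blast
      ultimately show ?thesis unfolding pr_def by auto
    next
      assume "x \<in> {a}" then show ?thesis using assms unfolding pr_def by auto
    qed
  qed
  then have "mu (pr a \<union> {a}) \<le> g b" unfolding g_def by (rule mu_mono)
  moreover have "mu (pr a \<union> {a}) = g a + w a"
    using mu_add[of "pr a" "{a}"] pr_sub aW mu_single unfolding g_def pr_def by auto
  ultimately show ?thesis by simp
qed

lemma g_top: assumes "a \<in> Field r" shows "g a + w a \<le> mu (Field r)"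
proof -
  have "mu (pr a \<union> {a}) \<le> mu (Field r)" using pr_sub assms by (intro mu_mono) auto
  moreover have "mu (pr a \<union> {a}) = g a + w a"
    using mu_add[of "pr a" "{a}"] pr_sub assms mu_single unfolding g_def pr_def by auto
  ultimately show ?thesis by simp
qed

lemma g_mono: "(a, b) \<in> r \<Longrightarrow> g a \<le> g b"
  using g_strict[of a b] w_pos[of a] by (cases "a = b") auto

lemma g_lt_top: "a \<in> Field r \<Longrightarrow> g a < mu (Field r)"
  using g_top w_pos[of a] by force

lemma so_in: "(x, y) \<in> succ_ord r \<Longrightarrow> x \<in> insert None (Some ` Field r) \<and> y \<in> insert None (Some ` Field r)"
  unfolding succ_ord_def by (auto intro: FieldI1 FieldI2)

lemma field_so: "Field (succ_ord r) = insert None (Some ` Field r)"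
proof
  show "Field (succ_ord r) \<subseteq> insert None (Some ` Field r)"
    unfolding Field_def[of "succ_ord r"] using so_in by blast
  show "insert None (Some ` Field r) \<subseteq> Field (succ_ord r)"
  proof
    fix x assume x: "x \<in> insert None (Some ` Field r)"
    then have "(x, None) \<in> succ_ord r" unfolding succ_ord_def by auto
    then show "x \<in> Field (succ_ord r)" by (rule FieldI1)
  qed
qed

lemma so_Some: "(Some a, Some b) \<in> succ_ord r \<longleftrightarrow> (a, b) \<in> r"
  unfolding succ_ord_def by auto
lemma so_None2: "(x, None) \<in> succ_ord r \<longleftrightarrow> x \<in> insert None (Some ` Field r)"
  unfolding succ_ord_def by auto
lemma so_None1: "(None, Some b) \<notin> succ_ord r"
  unfolding succ_ord_def by auto

lemma g_le_iff: assumes "a \<in> Field r" "b \<in> Field r" shows "g a \<le> g b \<longleftrightarrow> (a, b) \<in> r"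
proof
  assume le: "g a \<le> g b"
  show "(a, b) \<in> r"
  proof (rule ccontr)
    assume n: "(a, b) \<notin> r"
    then have "(b, a) \<in> r" "b \<noteq> a" using total' assms refl by auto
    then have "g b + w b \<le> g a" by (rule g_strict)
    then show False using le w_pos[of b] by simp
  qed
qed (rule g_mono)

lemma psi_le_iff: assumes "x \<in> Field (succ_ord r)" "y \<in> Field (succ_ord r)"
  shows "psi x \<le> psi y \<longleftrightarrow> (x, y) \<in> succ_ord r"
proof (cases x)
  case None
  then show ?thesis
  proof (cases y)
    case None then show ?thesis using \<open>x = None\<close> so_None2 by (simp add: psi_def)
  next
    case (Some b)
    then have "b \<in> Field r" using assms field_so by auto
    then show ?thesis using \<open>x = None\<close> Some so_None1 g_lt_top[of b] by (simp add: psi_def)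
  qed
next
  case (Some a)
  then have aW: "a \<in> Field r" using assms field_so by auto
  then show ?thesis
  proof (cases y)
    case None then show ?thesis using Some so_None2 g_lt_top[OF aW] aW by (simp add: psi_def)
  next
    case (Some b)
    then have "b \<in> Field r" using assms field_so by auto
    then show ?thesis using \<open>x = Some a\<close> Some so_Some g_le_iff aW by (simp add: psi_def)
  qed
qed

lemma psi_inj: "inj_on psi (Field (succ_ord r))"
proof (rule inj_onI)
  fix x y assume xy: "x \<in> Field (succ_ord r)" "y \<in> Field (succ_ord r)" "psi x = psi y"
  then have "(x, y) \<in> succ_ord r" "(y, x) \<in> succ_ord r"
    using psi_le_iff[OF xy(1,2)] psi_le_iff[OF xy(2,1)] by auto
  then show "x = y" using so_None1 antisym'
    by (cases x; cases y) (auto simp: so_Some)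
qed

lemma ZZ_eq: "ZZ = insert (mu (Field r)) (g ` Field r)"
proof -
  have "psi \<circ> Some = g" by (auto simp: psi_def fun_eq_iff)
  then show ?thesis unfolding ZZ_def field_so by (simp add: image_image psi_def image_comp)
qed

lemma ZZ_bounds: "z \<in> ZZ \<Longrightarrow> 0 \<le> z \<and> z \<le> mu (Field r)"
  unfolding ZZ_eq using g_lt_top mu_nonneg g_def by (auto simp: less_imp_le)

lemma sep: assumes "m \<in> Field r" "z \<in> ZZ" shows "z \<le> g m \<or> g m + w m \<le> z"
proof -
  { fix a assume a: "a \<in> Field r" "z = g a"
    have ?thesis
    proof (cases "(a, m) \<in> r")
      case True then show ?thesis using g_mono a by auto
    next
      case False
      then have "(m, a) \<in> r" "m \<noteq> a" using total' a assms refl by auto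
      then show ?thesis using g_strict a by auto
    qed }
  then show ?thesis using assms g_top unfolding ZZ_eq by auto
qed

lemma zero_in: "0 \<in> ZZ"
proof (cases "Field r = {}")
  case True then show ?thesis unfolding ZZ_eq using mu_empty by simp
next
  case False
  then obtain c where c: "c \<in> Field r" "\<forall>x\<in>Field r. (c, x) \<in> r" using minim by blast
  have "pr c = {}"
  proof -
    { fix b assume "b \<in> pr c"
      then have "(b, c) \<in> r" "b \<noteq> c" unfolding pr_def by auto
      then have False using c antisym' inF by blast }
    then show ?thesis by auto
  qed
  then have "g c = 0" unfolding g_def using mu_empty by simp
  then show ?thesis unfolding ZZ_eq using c by force
qed

lemma gap: "\<forall>z1\<in>ZZ. \<forall>z2\<in>ZZ. z1 < z2 \<longrightarrow> (\<exists>y. z1 < y \<and> y < z2 \<and> y \<notin> ZZ)"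
proof (intro ballI impI)
  fix z1 z2 assume z: "z1 \<in> ZZ" "z2 \<in> ZZ" "z1 < z2"
  have "z1 \<noteq> mu (Field r)" using ZZ_bounds[OF z(2)] z(3) by auto
  then obtain m where m: "m \<in> Field r" "z1 = g m" using z(1) unfolding ZZ_eq by auto
  define y where "y = g m + w m / 2"
  have "y \<notin> ZZ" using sep[OF m(1)] w_pos[of m] y_def by force
  moreover have "g m + w m \<le> z2" using sep[OF m(1) z(2)] m z(3) by auto
  ultimately show "\<exists>y. z1 < y \<and> y < z2 \<and> y \<notin> ZZ" using w_pos[of m] m y_def
    by (intro exI[of _ y]) auto
qed

lemma sup_approx: assumes D: "D \<subseteq> Field r" "D \<noteq> {}"
    and nomax: "\<forall>a\<in>D. \<exists>b\<in>D. (a, b) \<in> r \<and> a \<noteq> b" and e: "\<epsilon> > 0"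
  shows "\<exists>a\<in>D. mu D - \<epsilon> < g a"
proof -
  obtain K where K: "(1/2::real)^K < \<epsilon>" using real_arch_pow_inv[OF e, of "1/2"] by auto
  define F where "F = {a\<in>D. idx a < K}"
  have imF: "idx ` F = idx ` D \<inter> {..<K}" unfolding F_def by auto
  have tail: "mu D \<le> mu F + (1/2)^K" unfolding mu_def imF by (rule msr_tail)
  have FD: "F \<subseteq> D" unfolding F_def by auto
  have "finite (idx ` F)" using imF by (simp add: finite_subset)
  moreover have "inj_on idx F" using inj_on_subset[OF inj_idx] D FD by blast
  ultimately have finF: "finite F" using finite_imageD by blast
  show ?thesis
  proof (cases "F = {}")
    case True
    then have "mu F = 0" using mu_empty by simp
    obtain a where "a \<in> D" using D by auto
    moreover have "0 \<le> g a" unfolding g_def by (rule mu_nonneg)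
    ultimately show ?thesis using tail K \<open>mu F = 0\<close> by force
  next
    case False
    obtain mF where mF: "mF \<in> F" "\<forall>x\<in>F. (x, mF) \<in> r" using finmax[OF finF False] FD D by auto
    then obtain b where b: "b \<in> D" "(mF, b) \<in> r" "mF \<noteq> b" using nomax FD by blast
    have "F \<subseteq> pr b"
    proof
      fix x assume x: "x \<in> F"
      then have xm: "(x, mF) \<in> r" using mF by auto
      then have "(x, b) \<in> r" using b trans' by blast
      moreover have "x \<noteq> b" using xm b antisym' by blast
      ultimately show "x \<in> pr b" unfolding pr_def by auto
    qed
    then have "mu F \<le> g b" unfolding g_def by (rule mu_mono)
    then show ?thesis using b tail K by force
  qed
qed

lemma ZZ_closed: "closed ZZ"
proof -
  have "t \<in> ZZ" if t: "t \<in> closure ZZ" for t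
  proof (rule ccontr)
    assume tn: "t \<notin> ZZ"
    have appr: "\<forall>e>0. \<exists>z\<in>ZZ. dist z t < e" using t closure_approachable by blast
    have isol: False if ab: "a < t" "t < b" "\<forall>z\<in>ZZ. z \<le> a \<or> b \<le> z" for a b
    proof -
      have "min (t-a) (b-t) > 0" using ab by simp
      then obtain z where z: "z \<in> ZZ" "dist z t < min (t-a) (b-t)" using appr by blast
      then have "z \<le> a \<or> b \<le> z" using ab(3) by blast
      moreover have "\<bar>z - t\<bar> < t - a" "\<bar>z - t\<bar> < b - t" using z(2) by (auto simp: dist_real_def)
      ultimately show False by linarith
    qed
    have t0: "0 \<le> t"
    proof (rule ccontr)
      assume "\<not> 0 \<le> t"
      moreover have "\<forall>z\<in>ZZ. z \<le> t - 1 \<or> 0 \<le> z" using ZZ_bounds by blast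
      ultimately show False using isol[of "t - 1" 0] by linarith
    qed
    have tW: "t \<le> mu (Field r)"
    proof (rule ccontr)
      assume "\<not> t \<le> mu (Field r)"
      moreover have "\<forall>z\<in>ZZ. z \<le> mu (Field r) \<or> t + 1 \<le> z" using ZZ_bounds by blast
      ultimately show False using isol[of "mu (Field r)" "t + 1"] by linarith
    qed
    define D where "D = {a \<in> Field r. g a < t}"
    have Dsub: "D \<subseteq> Field r" unfolding D_def by auto
    have Ddown: "b \<in> D" if "a \<in> D" "(b, a) \<in> r" for a b
      using that g_mono[OF that(2)] inF[OF that(2)] unfolding D_def by auto
    have muD: "mu D \<in> ZZ \<and> t \<le> mu D"
    proof (cases "Field r - D = {}")
      case True
      then have "D = Field r" using Dsub by auto
      then show ?thesis using tW unfolding ZZ_eq by auto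
    next
      case False
      then obtain c where c: "c \<in> Field r - D" "\<forall>x\<in>Field r - D. (c, x) \<in> r"
        using minim[of "Field r - D"] by auto
      have "pr c = D"
      proof
        show "pr c \<subseteq> D"
        proof
          fix b assume "b \<in> pr c"
          then have b: "(b, c) \<in> r" "b \<noteq> c" "b \<in> Field r" unfolding pr_def using inF by auto
          show "b \<in> D"
          proof (rule ccontr)
            assume "b \<notin> D"
            then have "(c, b) \<in> r" using c b by auto
            then show False using b antisym' by blast
          qed
        qed
        show "D \<subseteq> pr c"
        proof
          fix b assume bD: "b \<in> D"
          have "(b, c) \<in> r"
          proof (rule ccontr)
            assume "(b, c) \<notin> r"
            then have "(c, b) \<in> r" using total'[of b c] c Dsub bD by auto
            then have "c \<in> D" using Ddown bD by blast
            then show False using c by auto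
          qed
          moreover have "b \<noteq> c" using bD c by auto
          ultimately show "b \<in> pr c" unfolding pr_def by auto
        qed
      qed
      then have "mu D = g c" unfolding g_def by simp
      moreover have "t \<le> g c" using c unfolding D_def by auto
      ultimately show ?thesis using c unfolding ZZ_eq by auto
    qed
    show False
    proof (cases "\<exists>mx\<in>D. \<forall>a\<in>D. (a, mx) \<in> r")
      case True
      then obtain mx where mx: "mx \<in> D" "\<forall>a\<in>D. (a, mx) \<in> r" by auto
      have mxW: "mx \<in> Field r" using mx Dsub by auto
      have "D = pr mx \<union> {mx}"
      proof
        show "D \<subseteq> pr mx \<union> {mx}"
        proof
          fix a assume "a \<in> D"
          then have "(a, mx) \<in> r" using mx by blast
          then show "a \<in> pr mx \<union> {mx}" unfolding pr_def by blast
        qed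
        show "pr mx \<union> {mx} \<subseteq> D"
        proof
          fix a assume "a \<in> pr mx \<union> {mx}"
          then have "a = mx \<or> (a, mx) \<in> r" unfolding pr_def by blast
          then show "a \<in> D" using mx(1) Ddown[of mx a] by blast
        qed
      qed
      then have "mu D = g mx + w mx"
        using mu_add[of "pr mx" "{mx}"] pr_sub mxW mu_single unfolding g_def pr_def by auto
      moreover have "g mx < t" using mx unfolding D_def by auto
      moreover have "t \<noteq> mu D" using muD tn by auto
      moreover have "\<forall>z\<in>ZZ. z \<le> g mx \<or> g mx + w mx \<le> z" using sep[OF mxW] by blast
      ultimately show False using isol[of "g mx" "g mx + w mx"] muD by linarith
    next
      case False
      have "mu D \<le> t"
      proof (cases "D = {}")
        case True then show ?thesis using mu_empty t0 by simp
      next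
        case ne: False
        have nomax: "\<forall>a\<in>D. \<exists>b\<in>D. (a, b) \<in> r \<and> a \<noteq> b"
        proof
          fix a assume aD: "a \<in> D"
          then obtain b where b: "b \<in> D" "(b, a) \<notin> r" using False by auto
          then have "(a, b) \<in> r" using total'[of a b] aD Dsub by auto
          moreover have "a \<noteq> b" using b aD Dsub refl by auto
          ultimately show "\<exists>b\<in>D. (a, b) \<in> r \<and> a \<noteq> b" using b by auto
        qed
        show ?thesis
        proof (rule ccontr)
          assume "\<not> mu D \<le> t"
          then have "mu D - t > 0" by simp
          then obtain a where a: "a \<in> D" "mu D - (mu D - t) < g a"
            using sup_approx[OF Dsub ne nomax, of "mu D - t"] by blast
          have "g a < t" using a(1) unfolding D_def by blast
          then show False using a(2) by simp
        qed
      qed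
      then show False using muD tn by auto
    qed
  qed
  then have "closure ZZ \<subseteq> ZZ" by blast
  then show ?thesis using closure_subset_eq by blast
qed

lemma main: "\<exists>f :: real \<Rightarrow> real.
           continuous_on {0..1} f \<and> f ` {0..1} \<subseteq> {0..1} \<and>
           (\<exists>\<phi>. bij_betw \<phi> (chain_components f) (Field (succ_ord r)) \<and>
                 (\<forall>A\<in>chain_components f. \<forall>B\<in>chain_components f.
                    comp_le f A B \<longleftrightarrow> (\<phi> A, \<phi> B) \<in> succ_ord r))"
proof -
  have sub: "ZZ \<subseteq> {0..1}"
  proof
    fix z assume "z \<in> ZZ"
    then have "0 \<le> z" "z \<le> mu (Field r)" using ZZ_bounds by auto
    then show "z \<in> {0..1}" using mu_le1[of "Field r"] by simp
  qed
  note A = partA[OF ZZ_closed sub zero_in gap]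
  define FS where "FS = Field (succ_ord r)"
  define h where "h x = {psi x}" for x
  have hinj: "inj_on h FS" using psi_inj unfolding h_def FS_def inj_on_def by auto
  have "h ` FS = (\<lambda>p. {p}) ` ZZ" unfolding h_def FS_def ZZ_def image_image by simp
  then have himg: "h ` FS = chain_components (fZ ZZ)" using A(3) by simp
  have bij: "bij_betw h FS (chain_components (fZ ZZ))" using hinj himg by (simp add: bij_betw_def)
  define \<phi> where "\<phi> = inv_into FS h"
  have bij2: "bij_betw \<phi> (chain_components (fZ ZZ)) FS" unfolding \<phi>_def by (rule bij_betw_inv_into[OF bij])
  have ord: "comp_le (fZ ZZ) A B \<longleftrightarrow> (\<phi> A, \<phi> B) \<in> succ_ord r"
    if "A \<in> chain_components (fZ ZZ)" "B \<in> chain_components (fZ ZZ)" for A B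
  proof -
    have AB: "A \<in> h ` FS" "B \<in> h ` FS" using that himg by simp_all
    obtain x where x: "x \<in> FS" "A = h x" using AB(1) by (rule imageE) simp
    obtain y where y: "y \<in> FS" "B = h y" using AB(2) by (rule imageE) simp
    have xy: "x \<in> FS" "y \<in> FS" "A = h x" "B = h y" using x y by simp_all
    have "\<phi> A = x" using inv_into_f_f[OF hinj x(1)] unfolding \<phi>_def x(2) .
    moreover have "\<phi> B = y" using inv_into_f_f[OF hinj y(1)] unfolding \<phi>_def y(2) .
    moreover have "psi x \<in> ZZ" "psi y \<in> ZZ" using xy unfolding ZZ_def FS_def by auto
    ultimately have phis: "\<phi> A = x" "\<phi> B = y" and ps: "psi x \<in> ZZ" "psi y \<in> ZZ" by auto
    have "comp_le (fZ ZZ) A B \<longleftrightarrow> psi x \<le> psi y"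
      using A(4) ps xy(3,4) unfolding h_def by simp
    also have "\<dots> \<longleftrightarrow> (x, y) \<in> succ_ord r" using psi_le_iff xy(1,2) unfolding FS_def by simp
    finally show ?thesis using phis by simp
  qed
  have bij3: "bij_betw \<phi> (chain_components (fZ ZZ)) (Field (succ_ord r))" using bij2 unfolding FS_def .
  show ?thesis
    apply (rule exI[of _ "fZ ZZ"])
    apply (intro conjI A(1) A(2))
    apply (rule exI[of _ \<phi>])
    apply (intro conjI bij3 ballI ord)
    apply assumption+
    done
qed

end

theorem theorem2p3:
  fixes r :: "'a rel"
  assumes "Well_order r" and "countable (Field r)"
  shows "\<exists>f :: real \<Rightarrow> real.
           continuous_on {0..1} f \<and> f ` {0..1} \<subseteq> {0..1} \<and>
           (\<exists>\<phi>. bij_betw \<phi> (chain_components f) (Field (succ_ord r)) \<and>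
                 (\<forall>A\<in>chain_components f. \<forall>B\<in>chain_components f.
                    comp_le f A B \<longleftrightarrow> (\<phi> A, \<phi> B) \<in> succ_ord r))"
proof -
  interpret woe r using assms by unfold_locales
  show ?thesis by (rule main)
qed

end
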